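(* Let $k\ge1$, let $\Gamma=\mathbb{Z}_2\,\mathrm{wr}\,\mathbb{Z}^k=\Sigma\rtimes_\alpha\mathbb{Z}^k$, let $\phi:\Gamma\to\Gamma$ be an automorphism, let $\phi'=\phi|_\Sigma$ and let $\overline{\phi}:\mathbb{Z}^k\to\mathbb{Z}^k$ be the automorphism induced on $\Gamma/\Sigma\cong\mathbb{Z}^k$. Let $x_0\in\mathbb{Z}^k$ be the element with $\phi'(\delta_0)=\delta_{x_0}$ (so that $\phi'(\delta_y)=\delta_{\overline{\phi}(y)+x_0}$ for all $y\in\mathbb{Z}^k$). If $\delta_{x_1}$ and $\delta_{x_2}$ ($x_1,x_2\in\mathbb{Z}^k$) belong to the same Reidemeister class of $\phi'$, then for some integer $t\ge0$ either $$\overline{\phi}^t(x_1)+\overline{\phi}^{t-1}(x_0)+\dots+\overline{\phi}(x_0)+x_0=x_2$$ or $$\overline{\phi}^t(x_2)+\overline{\phi}^{t-1}(x_0)+\dots+\overline{\phi}(x_0)+x_0=x_1$$ (for $t=0$ the sum of the $x_0$-terms is empty).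
   Context: $\mathbb{Z}_2\,\mathrm{wr}\,\mathbb{Z}^k$ is $\Sigma\rtimes_\alpha\mathbb{Z}^k$ with $\Sigma=\bigoplus_{x\in\mathbb{Z}^k}(\mathbb{Z}_2)_{(x)}$ (finitely supported), $\delta_x$ the nontrivial element of $(\mathbb{Z}_2)_{(x)}$, and $\alpha(y)(\delta_x)=\delta_{y+x}$. $\Sigma$ is characteristic (the torsion subgroup), so $\phi$ restricts to $\phi'$ on $\Sigma$ and induces $\overline\phi$ on the quotient $\mathbb{Z}^k$; $\phi'$ maps each $\delta_0$ to a single $\delta_{x_0}$. Reidemeister classes of an automorphism $\psi$ of a group $G$ are the classes of the relation $g\sim hg\psi(h^{-1})$. *)

theory Defs
  imports "HOL-Algebra.Group" "HOL-Analysis.Finite_Cartesian_Product"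
begin

text \<open>The lamplighter group Z_2 wr Z^k, realised concretely: an element (S, a) consists of
  a finite set S of lattice points (the element of Sigma = sum of delta_x for x in S, with
  symmetric difference as the group law) and a point a of Z^k.  Multiplication is the
  semidirect product law (S,a)(T,b) = (S + alpha(a)(T), a + b), where alpha(a) translates
  by a.  The dimension k is the cardinality of the finite index type 'n (so k >= 1).\<close>

definition lamplighter :: "((int ^ 'n::finite) set \<times> (int ^ 'n)) monoid" where
  "lamplighter =
     \<lparr> carrier = {p. finite (fst p)},
       mult = (\<lambda>p q. ((fst p - (\<lambda>x. snd p + x) ` fst q) \<union> ((\<lambda>x. snd p + x) ` fst q - fst p),
                        snd p + snd q)),
       one = ({}, 0) \<rparr>"

definition lamp_Sigma :: "((int ^ 'n::finite) set \<times> (int ^ 'n)) set" where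
  "lamp_Sigma = {(S, 0) | S. finite S}"

definition lamp_Sigma_grp :: "((int ^ 'n::finite) set \<times> (int ^ 'n)) monoid" where
  "lamp_Sigma_grp = lamplighter\<lparr>carrier := lamp_Sigma\<rparr>"

definition lamp_delta :: "int ^ 'n::finite \<Rightarrow> (int ^ 'n) set \<times> (int ^ 'n)" where
  "lamp_delta x = ({x}, 0)"

text \<open>The automorphism of Gamma / Sigma = Z^k induced by phi (quotient map = snd).\<close>
definition lamp_bar :: "((int ^ 'n::finite) set \<times> (int ^ 'n) \<Rightarrow> (int ^ 'n) set \<times> (int ^ 'n))
                         \<Rightarrow> int ^ 'n \<Rightarrow> int ^ 'n" where
  "lamp_bar \<phi> y = snd (\<phi> ({}, y))"

definition reidemeister_rel :: "('a, 'b) monoid_scheme \<Rightarrow> ('a \<Rightarrow> 'a) \<Rightarrow> 'a \<Rightarrow> 'a \<Rightarrow> bool" where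
  "reidemeister_rel G \<psi> g g' \<longleftrightarrow> g \<in> carrier G \<and> g' \<in> carrier G \<and>
     (\<exists>h\<in>carrier G. g' = h \<otimes>\<^bsub>G\<^esub> g \<otimes>\<^bsub>G\<^esub> \<psi> (inv\<^bsub>G\<^esub> h))"

end

theory Submission
  imports Defs
begin

definition sd :: "'a set \<Rightarrow> 'a set \<Rightarrow> 'a set" where "sd A B = (A - B) \<union> (B - A)"

lemma ll_mult: "(A,a) \<otimes>\<^bsub>lamplighter\<^esub> (B,b) = (sd A ((\<lambda>x. a + x) ` B), a + b)"
  by (simp add: lamplighter_def sd_def)

lemma ll_mult_snd: "snd (p \<otimes>\<^bsub>lamplighter\<^esub> q) = snd p + snd q"
  by (simp add: lamplighter_def)

lemma ll_carrier: "p \<in> carrier lamplighter \<longleftrightarrow> finite (fst p)"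
  by (simp add: lamplighter_def)

lemma vec_dbl: "(y::int^'n::finite) + y = 0 \<Longrightarrow> y = 0"
  by (simp add: vec_eq_iff)

lemma sd_self: "sd A A = {}" by (auto simp: sd_def)
lemma sd_empty_eq: "sd A B = {} \<Longrightarrow> A = B" by (auto simp: sd_def)
lemma sd_canc: "sd (sd A C) A = C" by (auto simp: sd_def)

lemma even_sd:
  assumes "finite A" "finite B" "card A = card B"
  shows "even (card (sd A B))"
proof -
  have "card (sd A B) = card (A - B) + card (B - A)"
    unfolding sd_def using assms by (intro card_Un_disjoint) auto
  also have "\<dots> = (card A - card (A \<inter> B)) + (card B - card (A \<inter> B))"
    using assms by (simp add: card_Diff_subset_Int Int_commute)
  finally show ?thesis using assms by simp
qed

lemma comb:
  fixes f :: "'a \<Rightarrow> 'a"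
  assumes inj: "inj f" and fin: "finite H" and eq: "sd H (f ` H) = sd {x1} {x2}"
  shows "\<exists>t. x2 = (f^^t) x1 \<or> (f^^t) x2 = x1"
proof (rule ccontr)
  assume nx: "\<not> ?thesis"
  define Orb where "Orb = {z. \<exists>t. z = (f^^t) x1 \<or> (f^^t) z = x1}"
  have x1Orb: "x1 \<in> Orb" unfolding Orb_def by (rule CollectI, rule exI[of _ 0]) simp
  have x2Orb: "x2 \<notin> Orb" using nx unfolding Orb_def by auto
  have fwd: "f z \<in> Orb" if "z \<in> Orb" for z
  proof -
    from that obtain t where "z = (f^^t) x1 \<or> (f^^t) z = x1" unfolding Orb_def by auto
    then show ?thesis
    proof
      assume "z = (f^^t) x1" then have "f z = (f^^Suc t) x1" by simp
      then show ?thesis unfolding Orb_def by blast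
    next
      assume h: "(f^^t) z = x1"
      show ?thesis
      proof (cases t)
        case 0 then have "f z = (f^^1) x1" using h by simp
        then show ?thesis unfolding Orb_def by blast
      next
        case (Suc s) then have "(f^^s) (f z) = x1" using h by (simp add: funpow_Suc_right del: funpow.simps)
        then show ?thesis unfolding Orb_def by blast
      qed
    qed
  qed
  have bwd: "z \<in> Orb" if "f z \<in> Orb" for z
  proof -
    from that obtain t where "f z = (f^^t) x1 \<or> (f^^t) (f z) = x1" unfolding Orb_def by auto
    then show ?thesis
    proof
      assume h: "f z = (f^^t) x1"
      show ?thesis
      proof (cases t)
        case 0 then have "(f^^1) z = x1" using h by simp
        then show ?thesis unfolding Orb_def by blast
      next
        case (Suc s) then have "f z = f ((f^^s) x1)" using h by simp
        then have "z = (f^^s) x1" using inj by (simp add: inj_eq)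
        then show ?thesis unfolding Orb_def by blast
      qed
    next
      assume "(f^^t) (f z) = x1" then have "(f^^Suc t) z = x1" by (simp add: funpow_Suc_right del: funpow.simps)
      then show ?thesis unfolding Orb_def by blast
    qed
  qed
  define A where "A = H \<inter> Orb"
  have fA: "f ` A = f ` H \<inter> Orb" unfolding A_def using fwd bwd by blast
  have "sd A (f ` A) = sd A (f ` H \<inter> Orb)" using fA by simp
  also have "\<dots> = sd H (f ` H) \<inter> Orb" unfolding A_def sd_def by blast
  also have "\<dots> = {x1}" using eq x1Orb x2Orb by (auto simp: sd_def)
  finally have "sd A (f ` A) = {x1}" .
  moreover have "even (card (sd A (f ` A)))"
    apply (rule even_sd) using fin inj unfolding A_def by (auto simp: card_image inj_on_subset)
  ultimately show False by simp
qed

theorem lemma2p2: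
  fixes \<phi> :: "(int ^ 'n::finite) set \<times> (int ^ 'n) \<Rightarrow> (int ^ 'n) set \<times> (int ^ 'n)"
    and x0 x1 x2 :: "int ^ 'n"
  assumes aut: "\<phi> \<in> iso lamplighter lamplighter"
    and x0: "\<phi> (lamp_delta 0) = lamp_delta x0"
    and reid: "reidemeister_rel lamp_Sigma_grp (restrict \<phi> lamp_Sigma) (lamp_delta x1) (lamp_delta x2)"
  shows "\<exists>t::nat. ((lamp_bar \<phi> ^^ t) x1 + (\<Sum>i<t. (lamp_bar \<phi> ^^ i) x0) = x2)
              \<or> ((lamp_bar \<phi> ^^ t) x2 + (\<Sum>i<t. (lamp_bar \<phi> ^^ i) x0) = x1)"
proof -
  have hom: "\<phi> \<in> hom lamplighter lamplighter" and bij: "bij_betw \<phi> (carrier lamplighter) (carrier lamplighter)"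
    using aut by (auto simp: iso_def)
  have hm: "\<phi> (x \<otimes>\<^bsub>lamplighter\<^esub> y) = \<phi> x \<otimes>\<^bsub>lamplighter\<^esub> \<phi> y"
    if "x \<in> carrier lamplighter" "y \<in> carrier lamplighter" for x y
    using hom that by (rule hom_mult)
  have cl: "\<phi> x \<in> carrier lamplighter" if "x \<in> carrier lamplighter" for x
    using hom that by (rule hom_in_carrier)
  have injp: "inj_on \<phi> (carrier lamplighter)" using bij by (simp add: bij_betw_def)
  let ?lb = "lamp_bar \<phi>"
  have c0: "({}, y) \<in> carrier lamplighter" for y :: "int^'n" by (simp add: ll_carrier)
  have ee: "({}, y) \<otimes>\<^bsub>lamplighter\<^esub> ({}, z) = ({}, y + z)" for y z :: "int^'n"
    by (simp add: ll_mult sd_def)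
  have hz: "\<phi> ({}, y + z) = \<phi> ({}, y) \<otimes>\<^bsub>lamplighter\<^esub> \<phi> ({}, z)" for y z
    using hm[OF c0 c0, of y z] by (simp only: ee)
  have one: "\<phi> ({}, 0) = ({}, 0)"
  proof -
    obtain A b where Ab: "\<phi> ({}, 0) = (A, b)" by fastforce
    have e1: "({}, 0) \<otimes>\<^bsub>lamplighter\<^esub> ({}, 0) = (({}, 0) :: (int^'n) set \<times> (int^'n))" by (simp add: ll_mult sd_def)
    have e2: "\<phi> (({}, 0) \<otimes>\<^bsub>lamplighter\<^esub> ({}, 0)) = \<phi> ({}, 0) \<otimes>\<^bsub>lamplighter\<^esub> \<phi> ({}, 0)" by (rule hm[OF c0 c0])
    have "\<phi> ({}, 0) = \<phi> ({}, 0) \<otimes>\<^bsub>lamplighter\<^esub> \<phi> ({}, 0)" using e1 e2 by simp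
    also have "\<dots> = (sd A ((\<lambda>x. b + x) ` A), b + b)" using Ab by (simp only: ll_mult)
    finally have "b = b + b" "A = sd A ((\<lambda>x. b + x) ` A)" using Ab by auto
    then have "b = 0" "A = {}" by (auto simp: sd_self)
    then show ?thesis using Ab by simp
  qed
  have lbadd: "?lb (y + z) = ?lb y + ?lb z" for y z
  proof -
    have "({}, y + z) = ({}, y) \<otimes>\<^bsub>lamplighter\<^esub> ({}, z)" by (simp add: ll_mult sd_def)
    then show ?thesis unfolding lamp_bar_def using hm[OF c0 c0] by (simp add: ll_mult_snd)
  qed
  have lb0: "?lb 0 = 0" using one by (simp add: lamp_bar_def)
  have lbz: "y = 0" if yz: "?lb y = 0" for y
  proof -
    obtain A where A: "\<phi> ({}, y) = (A, 0)" using yz unfolding lamp_bar_def by (metis prod.collapse)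
    have "({}, y + y) = ({}, y) \<otimes>\<^bsub>lamplighter\<^esub> ({}, y)" by (simp add: ll_mult sd_def)
    then have "\<phi> ({}, y + y) = \<phi> ({}, y) \<otimes>\<^bsub>lamplighter\<^esub> \<phi> ({}, y)" using hm[OF c0 c0] by metis
    also have "\<dots> = (sd A ((\<lambda>x. 0 + x) ` A), 0 + 0)" unfolding A by (rule ll_mult)
    finally have "\<phi> ({}, y + y) = (sd A A, 0)" by simp
    then have "\<phi> ({}, y + y) = \<phi> ({}, 0)" using one by (simp add: sd_self)
    then have "({}, y + y) = (({}, 0) :: (int^'n) set \<times> (int^'n))" using injp c0 by (meson inj_onD)
    then show ?thesis by (simp add: vec_dbl)
  qed
  have lbinj: "inj ?lb"
  proof (rule injI)
    fix y z assume "?lb y = ?lb z"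
    moreover have "?lb y = ?lb (y - z) + ?lb z" using lbadd[of "y - z" z] by simp
    ultimately have "?lb (y - z) = 0" by simp
    then show "y = z" using lbz by fastforce
  qed
  define f where "f y = ?lb y + x0" for y
  have finj: "inj f" using lbinj unfolding f_def by (auto simp: inj_def)
  have delta: "\<phi> ({y}, 0) = ({f y}, 0)" for y
  proof -
    have d0: "({0}, 0) \<in> carrier lamplighter" by (simp add: ll_carrier)
    obtain A b where Ab: "\<phi> ({}, y) = (A, b)" by fastforce
    obtain A' b' where Ab': "\<phi> ({}, -y) = (A', b')" by fastforce
    have "\<phi> ({}, 0) = \<phi> ({}, y + -y)" by simp
    also have "\<dots> = (sd A ((\<lambda>x. b + x) ` A'), b + b')" unfolding hz Ab Ab' by (rule ll_mult)
    finally have e: "sd A ((\<lambda>x. b + x) ` A') = {}" "b + b' = 0" using one by auto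
    have "({y}, 0) = (({}, y) \<otimes>\<^bsub>lamplighter\<^esub> ({0}, 0)) \<otimes>\<^bsub>lamplighter\<^esub> ({}, -y)"
      by (simp add: ll_mult sd_def)
    moreover have "({}, y) \<otimes>\<^bsub>lamplighter\<^esub> ({0}, 0) \<in> carrier lamplighter" by (simp add: ll_mult ll_carrier sd_def)
    ultimately have "\<phi> ({y}, 0) = (\<phi> ({}, y) \<otimes>\<^bsub>lamplighter\<^esub> \<phi> ({0}, 0)) \<otimes>\<^bsub>lamplighter\<^esub> \<phi> ({}, -y)"
      using hm c0 d0 by metis
    also have "\<dots> = (sd (sd A {b + x0}) ((\<lambda>x. b + x) ` A'), b + b')"
      using Ab Ab' x0 by (simp add: lamp_delta_def ll_mult)
    also have "\<dots> = ({b + x0}, 0)" using e sd_empty_eq[OF e(1)] sd_canc by metis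
    finally show ?thesis using Ab by (simp add: f_def lamp_bar_def add.commute)
  qed
  have img: "finite H \<Longrightarrow> \<phi> (H, 0) = (f ` H, 0)" for H
  proof (induction H rule: finite_induct)
    case empty then show ?case using one by simp
  next
    case (insert y H)
    have "(insert y H, 0) = ({y}, 0) \<otimes>\<^bsub>lamplighter\<^esub> (H, 0)"
      using insert by (auto simp: ll_mult sd_def)
    then have "\<phi> (insert y H, 0) = ({f y}, 0) \<otimes>\<^bsub>lamplighter\<^esub> (f ` H, 0)"
      using hm[of "({y}, 0)" "(H, 0)"] insert delta by (simp add: ll_carrier)
    also have "\<dots> = (f ` insert y H, 0)"
      using insert finj by (auto simp: ll_mult sd_def inj_eq)
    finally show ?case .
  qed
  have sgm: "mult lamp_Sigma_grp = mult lamplighter" "carrier lamp_Sigma_grp = lamp_Sigma"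
     "one lamp_Sigma_grp = ({}, 0)"
    by (simp_all add: lamp_Sigma_grp_def lamplighter_def)
  from reid obtain h where hS: "h \<in> lamp_Sigma" and
    hq: "lamp_delta x2 = h \<otimes>\<^bsub>lamp_Sigma_grp\<^esub> lamp_delta x1 \<otimes>\<^bsub>lamp_Sigma_grp\<^esub>
          restrict \<phi> lamp_Sigma (inv\<^bsub>lamp_Sigma_grp\<^esub> h)"
    unfolding reidemeister_rel_def sgm by blast
  from hS obtain H where hH: "h = (H, 0)" and finH: "finite H" by (auto simp: lamp_Sigma_def)
  have invh: "inv\<^bsub>lamp_Sigma_grp\<^esub> h = h"
    unfolding m_inv_def sgm hH
  proof (rule the_equality)
    show "(H, 0) \<in> lamp_Sigma \<and> (H, 0) \<otimes>\<^bsub>lamplighter\<^esub> (H, 0) = ({}, 0) \<and> (H, 0) \<otimes>\<^bsub>lamplighter\<^esub> (H, 0) = ({}, 0)"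
      using finH by (simp add: lamp_Sigma_def ll_mult sd_self)
  next
    fix y assume "y \<in> lamp_Sigma \<and> (H, 0) \<otimes>\<^bsub>lamplighter\<^esub> y = ({}, 0) \<and> y \<otimes>\<^bsub>lamplighter\<^esub> (H, 0) = ({}, 0)"
    then obtain Y where "y = (Y, 0)" "sd H Y = {}" by (auto simp: lamp_Sigma_def ll_mult)
    then show "y = (H, 0)" using sd_empty_eq by metis
  qed
  have "({x2}, 0) = (sd (sd H {x1}) (f ` H), (0::int^'n))"
    using hq unfolding invh sgm using hS hH img[OF finH] by (simp add: lamp_delta_def ll_mult)
  then have "{x2} = sd (sd H {x1}) (f ` H)" by simp
  then have "sd H (f ` H) = sd {x1} {x2}" by (auto simp: sd_def)
  from comb[OF finj finH this] obtain t where t: "x2 = (f^^t) x1 \<or> (f^^t) x2 = x1" by blast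
  have lbsum: "?lb (\<Sum>i<t. g i) = (\<Sum>i<t. ?lb (g i))" for t :: nat and g
    by (induction t) (simp_all add: lb0 lbadd)
  have fp: "(f^^t) x = (?lb ^^ t) x + (\<Sum>i<t. (?lb ^^ i) x0)" for t :: nat and x
  proof (induction t)
    case 0 then show ?case by simp
  next
    case (Suc t)
    have "(f^^Suc t) x = f ((f^^t) x)" by simp
    also have "\<dots> = ?lb ((?lb ^^ t) x + (\<Sum>i<t. (?lb ^^ i) x0)) + x0"
      unfolding Suc.IH by (simp only: f_def)
    also have "\<dots> = (?lb ^^ Suc t) x + (x0 + (\<Sum>i<t. (?lb ^^ Suc i) x0))"
      by (simp add: lbadd lbsum add_ac)
    also have "\<dots> = (?lb ^^ Suc t) x + (\<Sum>i<Suc t. (?lb ^^ i) x0)"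
      by (simp only: sum.lessThan_Suc_shift funpow_0)
    finally show ?case .
  qed
  show ?thesis using t fp by metis
qed

end
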